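(* For every hypergraph with loops $G=(V,E,L)$, the convex set $\mathrm{PP}(G)$ is closed.
   Context: A hypergraph with loops is $G=(V,E,L)$: $V$ a finite node set, $E$ a set of subsets of $V$ of cardinality at least two, $L$ a set of loops $\{i,i\}$, $i\in V$, partitioned as $L=L^-\cup L^+$ (minus/plus loops). $\mathrm{PP}(G):=\mathrm{conv}\{z\in\mathbb{R}^{V\cup E\cup L}: z_{ii}\ge z_i^2\ \forall\{i,i\}\in L^+,\ z_{ii}\le z_i^2\ \forall \{i,i\}\in L^-,\ z_e=\prod_{i\in e}z_i\ \forall e\in E,\ z_i\in[0,1]\ \forall i\in V\}$. *)

theory Defs
  imports "HOL-Analysis.Analysis"
begin

text \<open>Using the finite type ('v + 'v set + 'v), R^(V \<union> E \<union> L) is embedded in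
  real ^ ('v + 'v set + 'v) as the coordinate subspace of vectors vanishing
  outside V \<union> E \<union> L.\<close>
type_synonym 'v hg_index = "'v + 'v set + 'v"

abbreviation NodeIx :: "'v \<Rightarrow> 'v hg_index" where "NodeIx i \<equiv> Inl i"
abbreviation EdgeIx :: "'v set \<Rightarrow> 'v hg_index" where "EdgeIx e \<equiv> Inr (Inl e)"
abbreviation LoopIx :: "'v \<Rightarrow> 'v hg_index" where "LoopIx i \<equiv> Inr (Inr i)"

text \<open>A hypergraph with loops G = (V, E, L), L = L^- \<union> L^+ (a partition);
  the loop {i,i} is identified with node i, so L^- and L^+ are given as node sets.\<close>
definition hypergraph_with_loops :: "'v set \<Rightarrow> 'v set set \<Rightarrow> 'v set \<Rightarrow> 'v set \<Rightarrow> bool" where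
  "hypergraph_with_loops V E Lminus Lplus \<longleftrightarrow>
     finite V \<and> (\<forall>e\<in>E. e \<subseteq> V \<and> card e \<ge> 2) \<and>
     Lminus \<subseteq> V \<and> Lplus \<subseteq> V \<and> Lminus \<inter> Lplus = {}"

definition hg_coords :: "'v set \<Rightarrow> 'v set set \<Rightarrow> 'v set \<Rightarrow> 'v set \<Rightarrow> 'v hg_index set" where
  "hg_coords V E Lminus Lplus = NodeIx ` V \<union> EdgeIx ` E \<union> LoopIx ` (Lminus \<union> Lplus)"

definition PP_points :: "'v set \<Rightarrow> 'v set set \<Rightarrow> 'v set \<Rightarrow> 'v set \<Rightarrow> (real ^ ('v::finite) hg_index) set" where
  "PP_points V E Lminus Lplus =
     {z. (\<forall>k. k \<notin> hg_coords V E Lminus Lplus \<longrightarrow> z $ k = 0) \<and>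
         (\<forall>i\<in>Lplus. z $ LoopIx i \<ge> (z $ NodeIx i)^2) \<and>
         (\<forall>i\<in>Lminus. z $ LoopIx i \<le> (z $ NodeIx i)^2) \<and>
         (\<forall>e\<in>E. z $ EdgeIx e = (\<Prod>i\<in>e. z $ NodeIx i)) \<and>
         (\<forall>i\<in>V. 0 \<le> z $ NodeIx i \<and> z $ NodeIx i \<le> 1)}"

definition PP :: "'v set \<Rightarrow> 'v set set \<Rightarrow> 'v set \<Rightarrow> 'v set \<Rightarrow> (real ^ ('v::finite) hg_index) set" where
  "PP V E Lminus Lplus = convex hull (PP_points V E Lminus Lplus)"

end

theory Submission
  imports Defs
begin

lemma closed_Collect_ball':
  "(\<And>i. i \<in> A \<Longrightarrow> closed {x. P i x}) \<Longrightarrow> closed {x. \<forall>i\<in>A. P i x}"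
proof -
  assume h: "\<And>i. i \<in> A \<Longrightarrow> closed {x. P i x}"
  have "{x. \<forall>i\<in>A. P i x} = (\<Inter>i\<in>A. {x. P i x})" by auto
  then show ?thesis using h by (simp add: closed_INT)
qed

lemma closed_coord_eq: "closed {z::real^'n. z $ k = c}"
  by (intro closed_Collect_eq continuous_intros)

lemma closed_S0:
  fixes V :: "'v::finite set" and E :: "'v set set" and Lminus Lplus :: "'v set"
  shows "closed {z. z \<in> PP_points V E Lminus Lplus \<and> (\<forall>i\<in>Lminus \<union> Lplus. z $ LoopIx i = (z $ NodeIx i)^2)}"
  unfolding PP_points_def mem_Collect_eq
  by (intro closed_Collect_conj closed_Collect_ball' closed_Collect_all closed_Collect_imp open_Collect_const
        closed_Collect_eq closed_Collect_le continuous_intros)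

lemma closed_C:
  fixes Lminus Lplus :: "'v::finite set"
  shows "closed {c::real ^ 'v hg_index. (\<forall>k. k \<notin> LoopIx ` (Lminus \<union> Lplus) \<longrightarrow> c $ k = 0)
      \<and> (\<forall>i\<in>Lplus. c $ LoopIx i \<ge> 0) \<and> (\<forall>i\<in>Lminus. c $ LoopIx i \<le> 0)}"
  by (intro closed_Collect_conj closed_Collect_ball' closed_Collect_all closed_Collect_imp open_Collect_const
        closed_Collect_eq closed_Collect_le continuous_intros)

lemma convex_C:
  fixes Lminus Lplus :: "'v::finite set"
  shows "convex {c::real ^ 'v hg_index. (\<forall>k. k \<notin> LoopIx ` (Lminus \<union> Lplus) \<longrightarrow> c $ k = 0)
      \<and> (\<forall>i\<in>Lplus. c $ LoopIx i \<ge> 0) \<and> (\<forall>i\<in>Lminus. c $ LoopIx i \<le> 0)}"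
  unfolding convex_def by (auto simp: mult_nonneg_nonpos add_nonpos_nonpos)

lemma bounded_S0:
  fixes V :: "'v::finite set" and E :: "'v set set" and Lminus Lplus :: "'v set"
  assumes hg: "hypergraph_with_loops V E Lminus Lplus"
  shows "bounded {z. z \<in> PP_points V E Lminus Lplus \<and> (\<forall>i\<in>Lminus \<union> Lplus. z $ LoopIx i = (z $ NodeIx i)^2)}"
proof (rule bounded_subset[OF bounded_cbox[of "-1" "1"]], rule subsetI)
  fix z assume "z \<in> {z. z \<in> PP_points V E Lminus Lplus \<and> (\<forall>i\<in>Lminus \<union> Lplus. z $ LoopIx i = (z $ NodeIx i)^2)}"
  then have z: "z \<in> PP_points V E Lminus Lplus" and zl: "\<forall>i\<in>Lminus \<union> Lplus. z $ LoopIx i = (z $ NodeIx i)^2" by auto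
  have node: "0 \<le> z $ NodeIx i \<and> z $ NodeIx i \<le> 1" for i
  proof (cases "i \<in> V")
    case True then show ?thesis using z unfolding PP_points_def by auto
  next
    case False then have "NodeIx i \<notin> hg_coords V E Lminus Lplus" unfolding hg_coords_def by auto
    then show ?thesis using z unfolding PP_points_def by auto
  qed
  have "-1 \<le> z $ k \<and> z $ k \<le> 1" for k
  proof (cases "k \<in> hg_coords V E Lminus Lplus")
    case False then show ?thesis using z unfolding PP_points_def by auto
  next
    case True
    then consider (n) i where "k = NodeIx i" | (e) e where "e \<in> E" "k = EdgeIx e"
      | (l) i where "i \<in> Lminus \<union> Lplus" "k = LoopIx i" unfolding hg_coords_def by auto
    then show ?thesis
    proof cases
      case n then show ?thesis using node[of i] by auto
    next
      case e
      then have "z $ k = (\<Prod>i\<in>e. z $ NodeIx i)" using z unfolding PP_points_def by auto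
      moreover have "0 \<le> (\<Prod>i\<in>e. z $ NodeIx i)" using node by (simp add: prod_nonneg)
      moreover have "(\<Prod>i\<in>e. z $ NodeIx i) \<le> 1" using node by (simp add: prod_le_1)
      ultimately show ?thesis by auto
    next
      case l
      then have "z $ k = (z $ NodeIx i)^2" using zl by auto
      moreover have "(z $ NodeIx i)^2 \<le> 1" using node[of i] by (simp add: power_le_one)
      moreover have "0 \<le> (z $ NodeIx i)^2" by simp
      ultimately show ?thesis by linarith
    qed
  qed
  then show "z \<in> cbox (-1) 1" by (simp add: mem_box_cart)
qed


lemma decomp:
  fixes V :: "'v::finite set" and E :: "'v set set" and Lminus Lplus :: "'v set"
  assumes hg: "hypergraph_with_loops V E Lminus Lplus"
  shows "PP_points V E Lminus Lplus =
    {z. z \<in> PP_points V E Lminus Lplus \<and> (\<forall>i\<in>Lminus \<union> Lplus. z $ LoopIx i = (z $ NodeIx i)^2)}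
    + {c::real ^ 'v hg_index. (\<forall>k. k \<notin> LoopIx ` (Lminus \<union> Lplus) \<longrightarrow> c $ k = 0)
      \<and> (\<forall>i\<in>Lplus. c $ LoopIx i \<ge> 0) \<and> (\<forall>i\<in>Lminus. c $ LoopIx i \<le> 0)}"
    (is "?S = ?T + ?C")
proof
  have disj: "Lminus \<inter> Lplus = {}" using hg unfolding hypergraph_with_loops_def by auto
  show "?S \<subseteq> ?T + ?C"
  proof
    fix z assume z: "z \<in> ?S"
    define a where "a = (\<chi> k. case k of Inr (Inr i) \<Rightarrow> (if i \<in> Lminus \<union> Lplus then (z $ Inl i)^2 else z $ k) | _ \<Rightarrow> z $ k)"
    have aN[simp]: "a $ NodeIx i = z $ NodeIx i" for i by (simp add: a_def)
    have aE[simp]: "a $ EdgeIx e = z $ EdgeIx e" for e by (simp add: a_def)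
    have aL: "a $ LoopIx i = (if i \<in> Lminus \<union> Lplus then (z $ NodeIx i)^2 else z $ LoopIx i)" for i
      by (simp add: a_def)
    have aout: "a $ k = z $ k" if "k \<notin> LoopIx ` (Lminus \<union> Lplus)" for k
    proof (cases k)
      case (Inl x) then show ?thesis by (simp add: a_def)
    next
      case (Inr y) then show ?thesis using that by (cases y) (auto simp: a_def)
    qed
    have "a \<in> ?T"
    proof -
      have "k \<notin> hg_coords V E Lminus Lplus \<Longrightarrow> a $ k = 0" for k
      proof -
        assume k: "k \<notin> hg_coords V E Lminus Lplus"
        then have "k \<notin> LoopIx ` (Lminus \<union> Lplus)" unfolding hg_coords_def by auto
        then show ?thesis using aout k z unfolding PP_points_def by auto
      qed
      then show ?thesis using z disj unfolding PP_points_def by (auto simp: aL)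
    qed
    moreover have "z - a \<in> ?C"
    proof -
      have "(z - a) $ k = 0" if "k \<notin> LoopIx ` (Lminus \<union> Lplus)" for k using aout[OF that] by simp
      moreover have "(z - a) $ LoopIx i \<ge> 0" if "i \<in> Lplus" for i
        using that z disj unfolding PP_points_def by (simp add: aL; blast?)
      moreover have "(z - a) $ LoopIx i \<le> 0" if "i \<in> Lminus" for i
        using that z disj unfolding PP_points_def by (simp add: aL; blast?)
      ultimately show ?thesis by auto
    qed
    ultimately have "a + (z - a) \<in> ?T + ?C" by (rule set_plus_intro)
    then show "z \<in> ?T + ?C" by simp
  qed
  show "?T + ?C \<subseteq> ?S"
  proof
    fix w assume "w \<in> ?T + ?C"
    then obtain a c where a: "a \<in> ?T" and c: "c \<in> ?C" and w: "w = a + c" by (auto simp: set_plus_def)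
    have cN[simp]: "c $ NodeIx i = 0" for i using c by auto
    have cE[simp]: "c $ EdgeIx e = 0" for e using c by auto
    have cout: "k \<notin> hg_coords V E Lminus Lplus \<Longrightarrow> c $ k = 0" for k
      using c unfolding hg_coords_def by auto
    have aS: "a \<in> ?S" and aL: "\<forall>i\<in>Lminus \<union> Lplus. a $ LoopIx i = (a $ NodeIx i)^2" using a by auto
    have c1: "\<forall>i\<in>Lplus. c $ LoopIx i \<ge> 0" and c2: "\<forall>i\<in>Lminus. c $ LoopIx i \<le> 0" using c by auto
have aS': "\<forall>k. k \<notin> hg_coords V E Lminus Lplus \<longrightarrow> a $ k = 0"
       "\<forall>e\<in>E. a $ EdgeIx e = (\<Prod>i\<in>e. a $ NodeIx i)"
       "\<forall>i\<in>V. 0 \<le> a $ NodeIx i \<and> a $ NodeIx i \<le> 1"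
      using aS unfolding PP_points_def by blast+
    have f1: "\<forall>k. k \<notin> hg_coords V E Lminus Lplus \<longrightarrow> w $ k = 0"
      using aS'(1) cout unfolding w by simp
    have f2: "\<forall>i\<in>Lplus. w $ LoopIx i \<ge> (w $ NodeIx i)^2"
      using aL c1 unfolding w by simp
    have f3: "\<forall>i\<in>Lminus. w $ LoopIx i \<le> (w $ NodeIx i)^2"
      using aL c2 unfolding w by simp
    have f4: "\<forall>e\<in>E. w $ EdgeIx e = (\<Prod>i\<in>e. w $ NodeIx i)"
      using aS'(2) unfolding w by simp
    have f5: "\<forall>i\<in>V. 0 \<le> w $ NodeIx i \<and> w $ NodeIx i \<le> 1"
      using aS'(3) unfolding w by simp
    show "w \<in> ?S" unfolding PP_points_def by (rule CollectI, intro conjI f1 f2 f3 f4 f5)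
  qed
qed

theorem lemma1:
  fixes V :: "'v::finite set" and E :: "'v set set" and Lminus Lplus :: "'v set"
  assumes "hypergraph_with_loops V E Lminus Lplus"
  shows "closed (PP V E Lminus Lplus)"
proof -
  let ?T = "{z. z \<in> PP_points V E Lminus Lplus \<and> (\<forall>i\<in>Lminus \<union> Lplus. z $ LoopIx i = (z $ NodeIx i)^2)}"
  let ?C = "{c::real ^ 'v hg_index. (\<forall>k. k \<notin> LoopIx ` (Lminus \<union> Lplus) \<longrightarrow> c $ k = 0)
      \<and> (\<forall>i\<in>Lplus. c $ LoopIx i \<ge> 0) \<and> (\<forall>i\<in>Lminus. c $ LoopIx i \<le> 0)}"
  have cpt: "compact (convex hull ?T)"
    by (rule compact_convex_hull) (simp add: compact_eq_bounded_closed bounded_S0[OF assms] closed_S0)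
  have "PP V E Lminus Lplus = convex hull ?T + ?C"
  proof -
    have "PP V E Lminus Lplus = convex hull (?T + ?C)"
      unfolding PP_def by (subst decomp[OF assms]) (rule refl)
    also have "\<dots> = convex hull ?T + convex hull ?C" by (rule convex_hull_set_plus)
    also have "convex hull ?C = ?C" by (rule convex_hull_eq[THEN iffD2, OF convex_C])
    finally show ?thesis .
  qed
  also have "\<dots> = (\<Union>x\<in>convex hull ?T. \<Union>y\<in>?C. {x + y})"
    by (auto simp: set_plus_def)
  finally show ?thesis using compact_closed_sums[OF cpt closed_C] by simp
qed

end
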